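(* Let $n\ge1$ and consider a classification problem with $m$ classes, where class $c\in\{1,\dots,m\}$ is described by a bounded probability density $\rho_c$ on $[0,1]^n$ (with respect to Lebesgue measure). Let $\mathcal{C}:[0,1]^n\to\{1,\dots,m\}$ be a classifier with measurable level sets. Let $U_c=\sup_x\rho_c(x)$ and $f_c=\mathrm{vol}\{x\in[0,1]^n:\mathcal{C}(x)=c\}$. Choose a class $c$ with $f_c\le\frac12$ and $\epsilon\ge0$, and let $x$ be a random point with density $\rho_c$. Then with probability at least $$1-2U_c\exp(-\epsilon^2/n)$$ at least one of the following holds: (1) $\mathcal{C}(x)\neq c$; or (2) there exists $\hat x\in[0,1]^n$ with $\mathcal{C}(\hat x)\ne c$ and $\|x-\hat x\|_0\le\epsilon$, i.e. $\hat x$ is obtained from $x$ by modifying at most $\epsilon$ coordinates (pixels) while staying in the unit hypercube.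
   Context: $\|z\|_0=\#\{i:z_i\neq0\}$ counts nonzero entries; $\mathrm{vol}$ is Lebesgue measure. *)

theory Defs
  imports "HOL-Analysis.Analysis"
begin

definition unit_cube :: "(real ^ 'n) set" where
  "unit_cube = {x. \<forall>i. 0 \<le> x $ i \<and> x $ i \<le> 1}"

definition hamming :: "real ^ 'n \<Rightarrow> real ^ 'n \<Rightarrow> nat" where
  "hamming x y = card {i. x $ i \<noteq> y $ i}"

definition bounded_prob_density_on_cube :: "(real ^ 'n \<Rightarrow> real) \<Rightarrow> bool" where
  "bounded_prob_density_on_cube \<rho> \<longleftrightarrow>
     (\<forall>x\<in>unit_cube. 0 \<le> \<rho> x) \<and>
     set_integrable lebesgue unit_cube \<rho> \<and>
     (LINT x:unit_cube|lebesgue. \<rho> x) = 1 \<and>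
     bdd_above (\<rho> ` unit_cube)"

end

theory Submission imports Defs "HOL-Probability.Hoeffding"
begin

definition upd :: "real^'n \<Rightarrow> 'n \<Rightarrow> real \<Rightarrow> real^'n" where
  "upd x j w = (\<chi> i. if i = j then w else x$i)"

lemma upd_nth[simp]: "upd x j w $ i = (if i = j then w else x$i)"
  by (simp add: upd_def)

lemma continuous_upd: "continuous_on UNIV (\<lambda>p::(real^'n) \<times> real. upd (fst p) j (snd p))"
  unfolding upd_def
  by (rule continuous_on_vec_lambda, case_tac "i = j") (simp_all add: continuous_intros)

definition Psi :: "'n \<Rightarrow> (real^'n) \<times> real \<Rightarrow> (real^'n) \<times> real" where
  "Psi j p = (upd (fst p) j (snd p), fst p $ j)"

lemma Psi_meas: "Psi j \<in> borel_measurable borel"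
  unfolding Psi_def
  by (intro borel_measurable_continuous_onI continuous_on_Pair continuous_upd continuous_intros)



lemma prod_Basis_cart: "(\<Prod>b\<in>Basis. f b) = (\<Prod>i\<in>UNIV. f (axis i (1::real)) :: real)"
  by (simp add: Basis_vec_def axis_eq_axis prod.UNION_disjoint prod.reindex inj_on_def)


lemma emeasure_box_cart: "(\<And>i. l$i \<le> u$i) \<Longrightarrow> emeasure lborel (box l (u::real^'n)) = ennreal (\<Prod>i\<in>UNIV. u$i - l$i)"
proof -
  assume a: "\<And>i. l$i \<le> u$i"
  have "\<forall>b\<in>Basis. l \<bullet> b \<le> u \<bullet> b" using a by (auto simp: Basis_vec_def inner_axis)
  then have "emeasure lborel (box l u) = ennreal (\<Prod>b\<in>Basis. (u - l) \<bullet> b)"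
    by (simp add: emeasure_lborel_box_eq)
  also have "(\<Prod>b\<in>Basis. (u - l) \<bullet> b) = (\<Prod>i\<in>UNIV. (u - l) \<bullet> axis i 1)"
    by (rule prod_Basis_cart)
  finally show ?thesis by (simp add: inner_axis)
qed

lemma Psi_preimage:
  "Psi j -` (box la ua \<times> box (lb::real) ub) = box (upd la j lb) (upd ua j ub) \<times> box (la$j) (ua$j)"
proof (rule set_eqI, clarify)
  fix x w
  show "(x, w) \<in> Psi j -` (box la ua \<times> box lb ub) \<longleftrightarrow> (x, w) \<in> box (upd la j lb) (upd ua j ub) \<times> box (la$j) (ua$j)"
  proof
    assume "(x, w) \<in> Psi j -` (box la ua \<times> box lb ub)"
    then have a: "\<And>i. la$i < upd x j w $ i \<and> upd x j w $ i < ua $ i" and b: "lb < x$j" "x$j < ub"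
      by (auto simp: Psi_def mem_box_cart)
    have "upd la j lb $ i < x $ i \<and> x $ i < upd ua j ub $ i" for i
      using a[of i] b by (cases "i = j") auto
    moreover have "la$j < w \<and> w < ua$j" using a[of j] by simp
    ultimately show "(x, w) \<in> box (upd la j lb) (upd ua j ub) \<times> box (la$j) (ua$j)"
      by (simp add: mem_box_cart)
  next
    assume "(x, w) \<in> box (upd la j lb) (upd ua j ub) \<times> box (la$j) (ua$j)"
    then have a: "\<And>i. upd la j lb $ i < x $ i \<and> x $ i < upd ua j ub $ i" and b: "la$j < w" "w < ua$j"
      by (auto simp: mem_box_cart)
    have "la$i < upd x j w $ i \<and> upd x j w $ i < ua $ i" for i
      using a[of i] b by (cases "i = j") auto
    moreover have "lb < x$j \<and> x$j < ub" using a[of j] by simp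
    ultimately show "(x, w) \<in> Psi j -` (box la ua \<times> box lb ub)"
      by (simp add: mem_box_cart Psi_def del: upd_nth)
  qed
qed

lemma Psi_preserve: "distr lborel borel (Psi j) = (lborel :: ((real^'n) \<times> real) measure)"
proof (rule lborel_eqI[symmetric])
  show "sets (distr lborel borel (Psi j)) = sets (borel :: ((real^'n) \<times> real) measure)" by simp
  fix l u :: "(real^'n) \<times> real"
  assume le: "\<And>b. b \<in> Basis \<Longrightarrow> l \<bullet> b \<le> u \<bullet> b"
  obtain la lb ua ub where lu: "l = (la, lb)" "u = (ua, ub)" by (cases l, cases u) auto
  have lea: "la $ i \<le> ua $ i" for i
  proof -
    have "(axis i 1, 0) \<in> (Basis :: ((real^'n) \<times> real) set)" by (simp add: Basis_prod_def)
    from le[OF this] show ?thesis by (simp add: lu inner_axis)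
  qed
  have leb: "lb \<le> ub"
  proof -
    have "(0, 1) \<in> (Basis :: ((real^'n) \<times> real) set)" by (simp add: Basis_prod_def)
    from le[OF this] show ?thesis by (simp add: lu)
  qed
  have bx: "box (la, lb) (ua, ub) = box la ua \<times> box lb ub"
    by (auto simp: box_def Basis_prod_def ball_Un)
  have "emeasure (distr lborel borel (Psi j)) (box l u) = emeasure lborel (Psi j -` box l u)"
    by (subst emeasure_distr) (auto simp: Psi_meas)
  also have "\<dots> = emeasure (lborel \<Otimes>\<^sub>M lborel) (box (upd la j lb) (upd ua j ub) \<times> box (la$j) (ua$j))"
    by (simp only: lu bx Psi_preimage lborel_prod)
  also have "\<dots> = emeasure lborel (box (upd la j lb) (upd ua j ub)) * emeasure lborel (box (la$j) (ua$j))"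
    by (rule lborel.emeasure_pair_measure_Times) auto
  also have "\<dots> = ennreal ((\<Prod>i\<in>UNIV. (if i = j then ub - lb else ua$i - la$i)) * (ua$j - la$j))"
  proof -
    have "emeasure lborel (box (upd la j lb) (upd ua j ub)) = ennreal (\<Prod>i\<in>UNIV. upd ua j ub $ i - upd la j lb $ i)"
      using lea leb by (intro emeasure_box_cart) simp
    moreover have "(\<Prod>i\<in>UNIV. upd ua j ub $ i - upd la j lb $ i) = (\<Prod>i\<in>UNIV. (if i = j then ub - lb else ua$i - la$i))"
      by (intro prod.cong) auto
    moreover have "emeasure lborel (box (la$j) (ua$j)) = ennreal (ua$j - la$j)"
      using lea[of j] by simp
    ultimately show ?thesis using lea leb by (simp add: ennreal_mult prod_nonneg)
  qed
  also have "(\<Prod>i\<in>UNIV. (if i = j then ub - lb else ua$i - la$i)) * (ua$j - la$j)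
      = (\<Prod>i\<in>UNIV. ua$i - la$i) * (ub - lb)"
  proof -
    have "(\<Prod>i\<in>UNIV. (if i = j then ub - lb else ua$i - la$i)) = (ub - lb) * (\<Prod>i\<in>UNIV-{j}. ua$i - la$i)"
      by (subst prod.remove[of _ j]) (auto intro!: prod.cong)
    moreover have "(\<Prod>i\<in>UNIV. ua$i - la$i) = (ua$j - la$j) * (\<Prod>i\<in>UNIV-{j}. ua$i - la$i)"
      by (subst prod.remove[of _ j]) auto
    ultimately show ?thesis by simp
  qed
  also have "(\<Prod>i\<in>UNIV. ua$i - la$i) * (ub - lb) = (\<Prod>b\<in>Basis. (u - l) \<bullet> b)"
  proof -
    have "(\<Prod>b\<in>Basis. (u - l) \<bullet> b) = (\<Prod>b\<in>(\<lambda>v. (v, 0)) ` Basis. (u - l) \<bullet> b) * (\<Prod>b\<in>(\<lambda>v. (0, v)) ` Basis. (u - l) \<bullet> b)"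
      unfolding Basis_prod_def by (rule prod.union_disjoint) auto
    also have "(\<Prod>b\<in>(\<lambda>v. (v, 0)) ` Basis. (u - l) \<bullet> b) = (\<Prod>b\<in>(Basis::(real^'n) set). (ua - la) \<bullet> b)"
      by (subst prod.reindex) (auto simp: inj_on_def lu)
    also have "\<dots> = (\<Prod>i\<in>UNIV. (ua - la) \<bullet> axis i 1)" by (rule prod_Basis_cart)
    also have "(\<Prod>b\<in>(\<lambda>v. (0, v)) ` Basis. (u - l) \<bullet> b) = (\<Prod>b\<in>(Basis::real set). (ub - lb) \<bullet> b)"
      by (subst prod.reindex) (auto simp: inj_on_def lu)
    finally show ?thesis by (simp add: inner_axis)
  qed
  finally show "emeasure (distr lborel borel (Psi j)) (box l u) = (\<Prod>b\<in>Basis. (u - l) \<bullet> b)" .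
qed

lemma unit_cube_cbox: "unit_cube = cbox (0::real^'n) 1"
  by (auto simp: unit_cube_def mem_box_cart)

lemma unit_cube_borel[measurable]: "unit_cube \<in> sets (borel :: (real^'n) measure)"
  by (simp add: unit_cube_cbox)

lemma compact_unit_cube: "compact (unit_cube :: (real^'n) set)"
  by (simp add: unit_cube_cbox)

lemma emeasure_unit_cube: "emeasure lborel (unit_cube :: (real^'n) set) = 1"
proof -
  have "\<forall>b\<in>Basis. (0::real^'n) \<bullet> b \<le> 1 \<bullet> b" by (auto simp: Basis_vec_def inner_axis)
  then have "emeasure lborel (cbox (0::real^'n) 1) = ennreal (\<Prod>b\<in>Basis. (1 - 0::real^'n) \<bullet> b)"
    by (simp add: emeasure_lborel_cbox_eq)
  also have "(\<Prod>b\<in>Basis. (1 - 0::real^'n) \<bullet> b) = (\<Prod>i\<in>UNIV. (1 - 0::real^'n) \<bullet> axis i 1)"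
    by (rule prod_Basis_cart)
  finally show ?thesis by (simp add: inner_axis unit_cube_cbox)
qed

lemma upd_measurable[measurable (raw)]:
  assumes "f \<in> borel_measurable M" "g \<in> borel_measurable M"
  shows "(\<lambda>x. upd (f x) j (g x) :: real^'n) \<in> borel_measurable M"
proof -
  have "(\<lambda>p::(real^'n) \<times> real. upd (fst p) j (snd p)) \<in> borel_measurable borel"
    by (intro borel_measurable_continuous_onI continuous_upd)
  then have c: "(\<lambda>p::(real^'n) \<times> real. upd (fst p) j (snd p)) \<in> borel_measurable (borel \<Otimes>\<^sub>M borel)"
    by (simp add: borel_prod)
  have "(\<lambda>x. (f x, g x)) \<in> M \<rightarrow>\<^sub>M borel \<Otimes>\<^sub>M borel" using assms by measurable
  from measurable_comp[OF this c] show ?thesis by (simp add: comp_def)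
qed

lemma Fub:
  fixes g :: "real^'n \<Rightarrow> ennreal"
  assumes g[measurable]: "g \<in> borel_measurable borel"
  shows "(\<integral>\<^sup>+x. indicator unit_cube x * g x \<partial>lborel)
    = (\<integral>\<^sup>+w. indicator {0..1} w * (\<integral>\<^sup>+x. indicator unit_cube x * g (upd x j w) \<partial>lborel) \<partial>lborel)"
proof -
  define G where "G = (\<lambda>p::(real^'n) \<times> real. indicator unit_cube (fst p) * g (fst p) * indicator {0..1::real} (snd p) :: ennreal)"
  have Gm2[measurable]: "G \<in> borel_measurable (lborel \<Otimes>\<^sub>M lborel)" 
    unfolding G_def by measurable
  have Gm[measurable]: "G \<in> borel_measurable borel" using Gm2 by (simp add: lborel_prod)
  have Gpm[measurable]: "(\<lambda>p. G (Psi j p)) \<in> borel_measurable (lborel \<Otimes>\<^sub>M lborel)"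
    using measurable_comp[OF Psi_meas Gm] by (simp add: lborel_prod comp_def)
  have int1: "(\<integral>\<^sup>+w. indicator {0..1::real} w \<partial>lborel) = 1" by simp
  have "(\<integral>\<^sup>+x. indicator unit_cube x * g x \<partial>lborel)
      = (\<integral>\<^sup>+x. indicator unit_cube x * g x * (\<integral>\<^sup>+w. indicator {0..1::real} w \<partial>lborel) \<partial>lborel)"
    by (simp only: int1 mult_1_right)
  also have "\<dots> = (\<integral>\<^sup>+x. \<integral>\<^sup>+w. G (x, w) \<partial>lborel \<partial>lborel)"
    unfolding G_def fst_conv snd_conv by (intro nn_integral_cong, subst nn_integral_cmult) auto
  also have "\<dots> = (\<integral>\<^sup>+p. G p \<partial>(lborel \<Otimes>\<^sub>M lborel))"
    by (rule lborel.nn_integral_fst) measurable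
  also have "\<dots> = (\<integral>\<^sup>+p. G p \<partial>(distr lborel borel (Psi j)))"
    by (simp add: lborel_prod Psi_preserve)
  also have "\<dots> = (\<integral>\<^sup>+p. G (Psi j p) \<partial>lborel)"
    by (rule nn_integral_distr) (simp_all add: Psi_meas)
  also have "\<dots> = (\<integral>\<^sup>+p. G (Psi j p) \<partial>(lborel \<Otimes>\<^sub>M lborel))"
    by (simp add: lborel_prod)
  also have "\<dots> = (\<integral>\<^sup>+w. \<integral>\<^sup>+x. G (Psi j (x, w)) \<partial>lborel \<partial>lborel)"
    by (rule lborel_pair.nn_integral_snd[symmetric]) measurable
  also have "\<dots> = (\<integral>\<^sup>+w. indicator {0..1} w * (\<integral>\<^sup>+x. indicator unit_cube x * g (upd x j w) \<partial>lborel) \<partial>lborel)"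
  proof (intro nn_integral_cong)
    fix w :: real
    have "G (Psi j (x, w)) = indicator {0..1} w * (indicator unit_cube x * g (upd x j w))" for x
    proof -
      have "indicator unit_cube (upd x j w) * (indicator {0..1::real} (x $ j) :: ennreal)
          = indicator {0..1} w * indicator unit_cube x"
      proof (cases "x \<in> unit_cube \<and> w \<in> {0..1}")
        case True
        then have "upd x j w \<in> unit_cube" "x$j \<in> {0..1}" by (auto simp: unit_cube_def)
        then show ?thesis using True by simp
      next
        case False
        then have "\<not> (upd x j w \<in> unit_cube \<and> x$j \<in> {0..1})"
          by (auto simp: unit_cube_def)
        then show ?thesis using False by (auto simp: indicator_def)
      qed
      then show ?thesis unfolding G_def Psi_def by (simp add: mult_ac)
    qed
    then show "(\<integral>\<^sup>+x. G (Psi j (x, w)) \<partial>lborel) = indicator {0..1} w * (\<integral>\<^sup>+x. indicator unit_cube x * g (upd x j w) \<partial>lborel)"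
      by (simp add: nn_integral_cmult)
  qed
  finally show ?thesis .
qed

definition dJ :: "'n set \<Rightarrow> (real^'n) set \<Rightarrow> real^'n \<Rightarrow> nat" where
  "dJ J A x = Min ((\<lambda>y. card {i\<in>J. x$i \<noteq> y$i}) ` A)"

lemma dJ_fin: "finite ((\<lambda>y. card {i\<in>J. x$i \<noteq> y$i}) ` (A::(real^'n) set))"
proof (rule finite_subset)
  show "(\<lambda>y. card {i\<in>J. x$i \<noteq> y$i}) ` A \<subseteq> {..CARD('n)}"
    by (auto intro!: card_mono)
qed simp

lemma dJ_le: "y \<in> A \<Longrightarrow> dJ J A x \<le> card {i\<in>J. x$i \<noteq> y$i}"
  unfolding dJ_def by (rule Min_le[OF dJ_fin]) simp

lemma dJ_ex: "A \<noteq> {} \<Longrightarrow> \<exists>y\<in>A. dJ J A x = card {i\<in>J. x$i \<noteq> y$i}"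
  unfolding dJ_def using Min_in[OF dJ_fin, of J x A] by auto

lemma dJ_bound: "A \<noteq> {} \<Longrightarrow> dJ J A x \<le> card J"
  using dJ_ex[of A J x] by (auto intro!: card_mono)

definition projS :: "'n set \<Rightarrow> real^'n \<Rightarrow> real^'n" where
  "projS S x = (\<chi> i. if i \<in> S then x$i else 0)"

lemma continuous_projS: "continuous_on UNIV (projS S)"
  unfolding projS_def
  by (rule continuous_on_vec_lambda, case_tac "i \<in> S") (simp_all add: continuous_intros)

lemma projS_eq: "projS S x = projS S y \<longleftrightarrow> (\<forall>i\<in>S. x$i = y$i)"
  by (auto simp: projS_def vec_eq_iff)

lemma dJ_sublevel:
  assumes "A \<noteq> {}"
  shows "{x. dJ J A x \<le> m} = (\<Union>S\<in>{S. S \<subseteq> J \<and> card (J - S) \<le> m}. projS S -` (projS S ` A))"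
proof (rule set_eqI, rule iffI)
  fix x assume "x \<in> {x. dJ J A x \<le> m}"
  then obtain y where y: "y \<in> A" "card {i\<in>J. x$i \<noteq> y$i} \<le> m"
    using dJ_ex[OF assms, of J x] by auto
  let ?S = "{i\<in>J. x$i = y$i}"
  have "J - ?S = {i\<in>J. x$i \<noteq> y$i}" by auto
  then have "?S \<in> {S. S \<subseteq> J \<and> card (J - S) \<le> m}" using y by auto
  moreover have "x \<in> projS ?S -` (projS ?S ` A)"
    using y by (auto simp: projS_eq intro!: image_eqI[of _ _ y])
  ultimately show "x \<in> (\<Union>S\<in>{S. S \<subseteq> J \<and> card (J - S) \<le> m}. projS S -` (projS S ` A))" by blast
next
  fix x assume "x \<in> (\<Union>S\<in>{S. S \<subseteq> J \<and> card (J - S) \<le> m}. projS S -` (projS S ` A))"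
  then obtain S y where S: "S \<subseteq> J" "card (J - S) \<le> m" and y: "y \<in> A" "projS S x = projS S y"
    by auto
  have "{i\<in>J. x$i \<noteq> y$i} \<subseteq> J - S" using y(2) by (auto simp: projS_eq)
  then have "card {i\<in>J. x$i \<noteq> y$i} \<le> card (J - S)" by (intro card_mono) auto
  with dJ_le[OF y(1), of J x] S show "x \<in> {x. dJ J A x \<le> m}" by auto
qed

lemma closed_dJ_sublevel:
  assumes "compact A" "A \<noteq> {}"
  shows "closed {x. dJ J A x \<le> m}"
  unfolding dJ_sublevel[OF assms(2)]
proof (rule closed_UN)
  show "finite {S. S \<subseteq> J \<and> card (J - S) \<le> m}" by simp
  show "\<forall>S\<in>{S. S \<subseteq> J \<and> card (J - S) \<le> m}. closed (projS S -` (projS S ` A))"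
  proof
  fix S
  have "compact (projS S ` A)" by (intro compact_continuous_image continuous_on_subset[OF continuous_projS] assms) auto
  then show "closed (projS S -` (projS S ` A))"
    by (intro closed_vimage continuous_projS compact_imp_closed)
  qed
qed

lemma dJ_measurable:
  assumes "compact A" "A \<noteq> {}"
  shows "dJ J A \<in> borel \<rightarrow>\<^sub>M count_space UNIV"
proof (subst measurable_count_space_eq_countable, simp, safe)
  fix a
  show "dJ J A -` {a} \<inter> space borel \<in> sets borel"
  proof (cases a)
    case 0
    then have "dJ J A -` {a} \<inter> space borel = {x. dJ J A x \<le> 0}" by auto
    moreover have "closed {x. dJ J A x \<le> 0}" by (rule closed_dJ_sublevel[OF assms])
    ultimately show ?thesis by (simp only:) (rule borel_closed)
  next
    case (Suc b)
    then have "dJ J A -` {a} \<inter> space borel = {x. dJ J A x \<le> a} - {x. dJ J A x \<le> b}" by auto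
    moreover have "closed {x. dJ J A x \<le> a}" "closed {x. dJ J A x \<le> b}" by (rule closed_dJ_sublevel[OF assms])+
    ultimately show ?thesis by (simp only:) (intro sets.Diff borel_closed)
  qed
qed simp

lemma dJ_measurable_comp:
  assumes "compact A" "A \<noteq> {}"
  shows "(\<lambda>x. h (dJ J A x) :: ennreal) \<in> borel_measurable borel"
proof -
  have "h \<in> count_space UNIV \<rightarrow>\<^sub>M borel" by simp
  from measurable_compose[OF dJ_measurable[OF assms] this] show ?thesis .
qed

lemma key_ineq:
  fixes t u :: real
  assumes t: "t \<ge> 0"
  shows "u * (1 + exp t) - exp t * u\<^sup>2 \<le> exp (t\<^sup>2 / 4)"
proof -
  define E where "E = exp t"
  have E: "E > 0" "E \<ge> 1" using t by (auto simp: E_def)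
  have "u * (1 + E) - E * u\<^sup>2 = E * (u * ((1 + E) / E - u))"
    using E by (simp add: field_simps power2_eq_square)
  also have "\<dots> \<le> E * (((1 + E) / E)\<^sup>2 / 4)"
    using E by (intro mult_left_mono mult_const_minus_self_real_le) auto
  also have "\<dots> = ((1 + E) / 2)\<^sup>2 / E"
    using E by (simp add: field_simps power2_eq_square)
  also have "\<dots> \<le> exp (t\<^sup>2 / 4)"
  proof -
    have "- t * (1/2) + ln (1 + (1/2) * (exp t - 1)) \<le> t\<^sup>2 / 8"
      using Hoeffdings_lemma_aux[of t "1/2"] t by simp
    then have "ln ((1 + E) / 2) \<le> t / 2 + t\<^sup>2 / 8"
      by (simp add: E_def field_simps)
    then have "exp (ln ((1 + E) / 2)) \<le> exp (t / 2 + t\<^sup>2 / 8)" by simp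
    then have "(1 + E) / 2 \<le> exp (t / 2 + t\<^sup>2 / 8)"
      using E by simp
    then have "((1 + E) / 2)\<^sup>2 \<le> (exp (t / 2 + t\<^sup>2 / 8))\<^sup>2"
      using E by (intro power_mono) auto
    also have "\<dots> = E * exp (t\<^sup>2 / 4)"
      by (simp add: E_def power2_eq_square exp_add[symmetric])
    finally show ?thesis using E by (simp add: field_simps)
  qed
  finally show ?thesis by (simp add: E_def)
qed

lemma pw_ineq:
  fixes h v b c E :: real
  assumes h: "0 \<le> h" and v: "0 \<le> v" "v \<le> b" and b: "0 < b" and c: "c \<ge> 0" and E: "E \<ge> 1"
    and hv: "v * h \<le> c" and hb: "b * h \<le> E * c"
  shows "h + c * E / b\<^sup>2 * v \<le> c * (1 + E) / b"
proof -
  have main: "h * b\<^sup>2 + c * E * v \<le> c * (1 + E) * b"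
  proof (cases "E * v \<ge> b")
    case True
    then have vpos: "v > 0" using b E v(1) by (cases "v = 0") auto
    have "h * b\<^sup>2 * v \<le> c * b\<^sup>2" using mult_right_mono[OF hv, of "b\<^sup>2"] by (simp add: mult_ac)
    moreover have "c * ((E * v - b) * (v - b)) \<le> 0"
      using True v c by (intro mult_nonneg_nonpos mult_nonneg_nonpos) auto
    ultimately have "(h * b\<^sup>2 + c * E * v - c * (1 + E) * b) * v \<le> 0"
      by (simp add: algebra_simps power2_eq_square)
    then show ?thesis using vpos by (simp add: mult_le_0_iff)
  next
    case False
    have "h * b\<^sup>2 \<le> E * c * b" using mult_right_mono[OF hb, of b] b by (simp add: mult_ac power2_eq_square)
    moreover have "c * (E * v) \<le> c * b" using False c by (intro mult_left_mono) auto
    ultimately show ?thesis by (simp add: algebra_simps)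
  qed
  have "h + c * E / b\<^sup>2 * v = (h * b\<^sup>2 + c * E * v) / b\<^sup>2" using b by (simp add: field_simps)
  also have "\<dots> \<le> c * (1 + E) * b / b\<^sup>2" using main b by (intro divide_right_mono) auto
  also have "\<dots> = c * (1 + E) / b" using b by (simp add: power2_eq_square)
  finally show ?thesis .
qed

definition EI :: "'n set \<Rightarrow> (real^'n) set \<Rightarrow> real \<Rightarrow> ennreal" where
  "EI J A t = (\<integral>\<^sup>+x. indicator unit_cube x * ennreal (exp (t * real (dJ J A x))) \<partial>lborel)"

lemma nn_integral_cube_const: "(\<integral>\<^sup>+x. indicator unit_cube x * ennreal K \<partial>(lborel::(real^'n) measure)) = ennreal K"
  by (subst mult.commute, subst nn_integral_cmult_indicator) (auto simp: emeasure_unit_cube)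

lemma EI_bound:
  fixes A :: "(real^'n) set"
  assumes "A \<noteq> {}" "t \<ge> 0"
  shows "EI J A t \<le> ennreal (exp (t * real (card J)))"
proof -
  have "EI J A t \<le> (\<integral>\<^sup>+x. indicator unit_cube x * ennreal (exp (t * real (card J))) \<partial>(lborel::(real^'n) measure))"
    unfolding EI_def
  proof (rule nn_integral_mono)
    fix x
    have "t * real (dJ J A x) \<le> t * real (card J)"
      using dJ_bound[OF assms(1)] assms(2) by (intro mult_left_mono) auto
    then show "indicator unit_cube x * ennreal (exp (t * real (dJ J A x))) \<le> indicator unit_cube x * ennreal (exp (t * real (card J)))"
      by (intro mult_left_mono ennreal_leI) auto
  qed
  then show ?thesis by (simp only: nn_integral_cube_const)
qed

lemma inner_meas:
  assumes g[measurable]: "g \<in> borel_measurable (borel :: (real^'n) measure)"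
  shows "(\<lambda>w. \<integral>\<^sup>+x. indicator unit_cube x * g (upd x j w) \<partial>lborel) \<in> borel_measurable lborel"
proof -
  have "(\<lambda>p::real \<times> (real^'n). indicator unit_cube (snd p) * g (upd (snd p) j (fst p))) \<in> borel_measurable (lborel \<Otimes>\<^sub>M lborel)"
    by measurable
  from lborel.borel_measurable_nn_integral_fst[OF this] show ?thesis by simp
qed

lemma continuous_upd1: "continuous_on UNIV (\<lambda>x::real^'n. upd x j w)"
  unfolding upd_def
  by (rule continuous_on_vec_lambda, case_tac "i = j") (simp_all add: continuous_intros)

lemma compact_borel: "compact (A :: (real^'n) set) \<Longrightarrow> A \<in> sets borel"
  by (intro borel_closed compact_imp_closed)

lemma emeasure_sub_cube_finite: "A \<subseteq> unit_cube \<Longrightarrow> emeasure lborel (A :: (real^'n) set) \<le> 1"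
  using emeasure_mono[of A unit_cube lborel] by (simp add: emeasure_unit_cube)

lemma talagrand:
  fixes J :: "'n::finite set" and t :: real
  assumes "finite J" and t: "t \<ge> 0"
  shows "compact A \<Longrightarrow> A \<subseteq> unit_cube \<Longrightarrow> A \<noteq> {} \<Longrightarrow>
    emeasure lborel A * EI J A t \<le> ennreal (exp (real (card J) * t\<^sup>2 / 4))"
  using assms(1)
proof (induction J arbitrary: A rule: finite_induct)
  case empty
  then obtain y where y: "y \<in> A" by auto
  have "dJ {} A x = 0" for x using dJ_le[OF y, of "{}" x] by simp
  then have "EI {} A t = (\<integral>\<^sup>+x. indicator unit_cube x * ennreal 1 \<partial>(lborel::(real^'n) measure))"
    by (simp add: EI_def)
  also have "\<dots> = 1" by (simp only: nn_integral_cube_const) simp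
  finally show ?case using emeasure_sub_cube_finite[OF empty.prems(2)] by simp
next
  case (insert j J)
  note A = insert.prems
  define Aw where "Aw w = {x \<in> unit_cube. upd x j w \<in> A}" for w
  define B where "B = {x \<in> unit_cube. \<exists>w\<in>{0..1}. upd x j w \<in> A}"
  define c where "c = exp (real (card J) * t\<^sup>2 / 4)"
  define E where "E = exp t"
  have E1: "E \<ge> 1" using t by (simp add: E_def)
  have c0: "c > 0" by (simp add: c_def)
  have Aw_compact: "compact (Aw w)" for w
  proof -
    have "Aw w = unit_cube \<inter> (\<lambda>x. upd x j w) -` A" by (auto simp: Aw_def)
    then show ?thesis
      by (simp add: compact_Int_closed compact_unit_cube closed_vimage continuous_upd1 compact_imp_closed A(1))
  qed
  have B_eq: "B = unit_cube \<inter> (\<lambda>x. upd x j 0) -` ((\<lambda>x. upd x j 0) ` A)"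
  proof (rule set_eqI, rule iffI)
    fix x assume "x \<in> B"
    then obtain w where "w \<in> {0..1}" "upd x j w \<in> A" "x \<in> unit_cube" by (auto simp: B_def)
    moreover have "upd x j 0 = upd (upd x j w) j 0" by (simp add: vec_eq_iff)
    ultimately show "x \<in> unit_cube \<inter> (\<lambda>x. upd x j 0) -` ((\<lambda>x. upd x j 0) ` A)" by auto
  next
    fix x assume "x \<in> unit_cube \<inter> (\<lambda>x. upd x j 0) -` ((\<lambda>x. upd x j 0) ` A)"
    then obtain a where x: "x \<in> unit_cube" and a: "a \<in> A" "upd x j 0 = upd a j 0" by auto
    have "upd x j (a$j) = a"
    proof (subst vec_eq_iff, rule allI)
      fix i show "upd x j (a$j) $ i = a $ i"
        using arg_cong[OF a(2), of "\<lambda>v. v$i"] by (cases "i = j") auto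
    qed
    moreover have "a$j \<in> {0..1}" using a(1) A(2) by (auto simp: unit_cube_def)
    ultimately show "x \<in> B" using x a by (auto simp: B_def intro!: bexI[of _ "a$j"])
  qed
  have B_compact: "compact B"
  proof -
    have "compact ((\<lambda>x. upd x j 0) ` A)"
      by (intro compact_continuous_image continuous_on_subset[OF continuous_upd1] A(1)) auto
    then show ?thesis unfolding B_eq
      by (simp add: compact_Int_closed compact_unit_cube closed_vimage continuous_upd1 compact_imp_closed)
  qed
  have A_sub_B: "A \<subseteq> B"
  proof
    fix x assume "x \<in> A"
    moreover have "upd x j (x$j) = x" by (simp add: vec_eq_iff)
    moreover have "x \<in> unit_cube" "x$j \<in> {0..1}" using \<open>x \<in> A\<close> A(2) by (auto simp: unit_cube_def)
    ultimately show "x \<in> B" unfolding B_def by (metis (mono_tags, lifting) mem_Collect_eq)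
  qed
  have B_ne: "B \<noteq> {}" using A_sub_B A(3) by auto
  have B_sub: "B \<subseteq> unit_cube" by (auto simp: B_def)
  have Aw_sub: "w \<in> {0..1} \<Longrightarrow> Aw w \<subseteq> B" for w by (auto simp: Aw_def B_def)
  have Aw_sub_cube: "Aw w \<subseteq> unit_cube" for w by (auto simp: Aw_def)
  have F5: "dJ (insert j J) A (upd x j w) \<le> dJ J (Aw w) x" if ne: "Aw w \<noteq> {}" for x w
  proof -
    obtain y where y: "y \<in> Aw w" "dJ J (Aw w) x = card {i\<in>J. x$i \<noteq> y$i}"
      using dJ_ex[OF ne] by blast
    have yA: "upd y j w \<in> A" using y(1) by (simp add: Aw_def)
    have "{i \<in> insert j J. upd x j w $ i \<noteq> upd y j w $ i} = {i\<in>J. x$i \<noteq> y$i}"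
      using insert.hyps(2) by auto
    with dJ_le[OF yA, of "insert j J" "upd x j w"] y(2) show ?thesis by simp
  qed
  have F6: "dJ (insert j J) A (upd x j w) \<le> dJ J B x + 1" for x w
  proof -
    obtain y where y: "y \<in> B" "dJ J B x = card {i\<in>J. x$i \<noteq> y$i}"
      using dJ_ex[OF B_ne] by blast
    then obtain w' where yA: "upd y j w' \<in> A" by (auto simp: B_def)
    have "{i \<in> insert j J. upd x j w $ i \<noteq> upd y j w' $ i} \<subseteq> insert j {i\<in>J. x$i \<noteq> y$i}"
      by auto
    then have "card {i \<in> insert j J. upd x j w $ i \<noteq> upd y j w' $ i} \<le> card (insert j {i\<in>J. x$i \<noteq> y$i})"
      by (intro card_mono) auto
    also have "\<dots> \<le> card {i\<in>J. x$i \<noteq> y$i} + 1" by (simp add: card_insert_if)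
    finally show ?thesis using dJ_le[OF yA, of "insert j J" "upd x j w"] y(2) by simp
  qed
  note IH = insert.IH
  define F where "F x = ennreal (exp (t * real (dJ (insert j J) A x)))" for x
  have Fm[measurable]: "F \<in> borel_measurable borel"
    unfolding F_def by (rule dJ_measurable_comp[OF A(1) A(3)])
  define H where "H w = (\<integral>\<^sup>+x. indicator unit_cube x * F (upd x j w) \<partial>lborel)" for w
  define V where "V w = emeasure lborel (Aw w)" for w
  have Hm[measurable]: "H \<in> borel_measurable lborel"
    unfolding H_def by (rule inner_meas[OF Fm])
  have A_borel[measurable]: "A \<in> sets borel" by (rule compact_borel[OF A(1)])
  have Aw_borel: "Aw w \<in> sets borel" for w by (rule compact_borel[OF Aw_compact])
  have V_eq: "V w = (\<integral>\<^sup>+x. indicator unit_cube x * indicator A (upd x j w) \<partial>lborel)" for w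
  proof -
    have "(\<integral>\<^sup>+x. indicator unit_cube x * indicator A (upd x j w) \<partial>lborel) = (\<integral>\<^sup>+x. indicator (Aw w) x \<partial>lborel)"
      by (intro nn_integral_cong) (auto simp: Aw_def indicator_def)
    then show ?thesis using Aw_borel by (simp add: V_def)
  qed
  have Vm[measurable]: "V \<in> borel_measurable lborel"
  proof -
    have "(\<lambda>w. \<integral>\<^sup>+x. indicator unit_cube x * indicator A (upd x j w) \<partial>lborel) \<in> borel_measurable lborel"
      by (rule inner_meas) measurable
    then show ?thesis by (simp add: V_eq[abs_def])
  qed
  have EI_split: "EI (insert j J) A t = (\<integral>\<^sup>+w. indicator {0..1} w * H w \<partial>lborel)"
    unfolding EI_def H_def F_def[symmetric] by (rule Fub[OF Fm])
  have A_split: "emeasure lborel A = (\<integral>\<^sup>+w. indicator {0..1} w * V w \<partial>lborel)"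
  proof -
    have "emeasure lborel A = (\<integral>\<^sup>+x. indicator unit_cube x * indicator A x \<partial>lborel)"
    proof -
      have "(\<integral>\<^sup>+x. indicator unit_cube x * indicator A x \<partial>lborel) = (\<integral>\<^sup>+x. indicator A x \<partial>lborel)"
        using A(2) by (intro nn_integral_cong) (auto simp: indicator_def)
      then show ?thesis by simp
    qed
    also have "\<dots> = (\<integral>\<^sup>+w. indicator {0..1} w * (\<integral>\<^sup>+x. indicator unit_cube x * indicator A (upd x j w) \<partial>lborel) \<partial>lborel)"
      by (rule Fub) measurable
    finally show ?thesis by (simp add: V_eq)
  qed
  show ?case
  proof (cases "emeasure lborel A = 0")
    case True
    then show ?thesis by simp
  next
    case False
    define a where "a = measure lborel A"
    define b where "b = measure lborel B"
    have B_borel: "B \<in> sets borel" by (rule compact_borel[OF B_compact])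
    have ea: "emeasure lborel A = ennreal a"
      unfolding a_def using emeasure_sub_cube_finite[OF A(2)] by (intro emeasure_eq_ennreal_measure) (auto simp: top_unique)
    have eb: "emeasure lborel B = ennreal b"
      unfolding b_def using emeasure_sub_cube_finite[OF B_sub] by (intro emeasure_eq_ennreal_measure) (auto simp: top_unique)
    have a0: "a > 0" using False ea by (simp add: a_def measure_nonneg order.not_eq_order_implies_strict)
    have ab: "a \<le> b"
    proof -
      have "emeasure lborel A \<le> emeasure lborel B" using A_sub_B B_borel by (intro emeasure_mono) auto
      then show ?thesis using ea eb by (simp add: b_def measure_nonneg)
    qed
    have b0: "b > 0" using a0 ab by simp
    have Hbound: "H w \<le> ennreal (exp (t * real (card (insert j J))))" for w
    proof -
      have "H w \<le> (\<integral>\<^sup>+x. indicator unit_cube x * ennreal (exp (t * real (card (insert j J)))) \<partial>(lborel::(real^'n) measure))"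
        unfolding H_def
      proof (rule nn_integral_mono)
        fix x
        have "t * real (dJ (insert j J) A (upd x j w)) \<le> t * real (card (insert j J))"
          using dJ_bound[OF A(3)] t by (intro mult_left_mono) auto
        then show "indicator unit_cube x * F (upd x j w) \<le> indicator unit_cube x * ennreal (exp (t * real (card (insert j J))))"
          unfolding F_def by (intro mult_left_mono ennreal_leI) auto
      qed
      then show ?thesis by (simp only: nn_integral_cube_const)
    qed
    define h where "h w = enn2real (H w)" for w
    have H_eq: "H w = ennreal (h w)" for w
      unfolding h_def using Hbound[of w] by (simp add: le_less_trans[OF _ ennreal_less_top])
    have h0: "h w \<ge> 0" for w by (simp add: h_def)
    define v where "v w = measure lborel (Aw w)" for w
    have V_eq2: "V w = ennreal (v w)" for w
      unfolding v_def V_def using emeasure_sub_cube_finite[OF Aw_sub_cube, of w] by (intro emeasure_eq_ennreal_measure) (auto simp: top_unique)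
    have v0: "v w \<ge> 0" for w by (simp add: v_def measure_nonneg)
    have P1: "v w * h w \<le> c" for w
    proof (cases "Aw w = {}")
      case True
      then show ?thesis using c0 by (simp add: v_def)
    next
      case ne: False
      have "H w \<le> EI J (Aw w) t"
        unfolding H_def EI_def
      proof (rule nn_integral_mono)
        fix x
        have "t * real (dJ (insert j J) A (upd x j w)) \<le> t * real (dJ J (Aw w) x)"
          using F5[OF ne, of x] t by (intro mult_left_mono) auto
        then show "indicator unit_cube x * F (upd x j w) \<le> indicator unit_cube x * ennreal (exp (t * real (dJ J (Aw w) x)))"
          unfolding F_def by (intro mult_left_mono ennreal_leI) auto
      qed
      then have "V w * H w \<le> emeasure lborel (Aw w) * EI J (Aw w) t"
        unfolding V_def by (rule mult_left_mono) simp
      also have "\<dots> \<le> ennreal c" unfolding c_def by (rule IH[OF Aw_compact Aw_sub_cube ne])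
      finally have "ennreal (v w * h w) \<le> ennreal c" using v0 h0 by (simp add: V_eq2 H_eq ennreal_mult)
      then show ?thesis using c0 by simp
    qed
    have P2: "b * h w \<le> E * c" for w
    proof -
      have m: "(\<lambda>x. ennreal (exp (t * real (dJ J B x)))) \<in> borel_measurable borel"
        by (rule dJ_measurable_comp[OF B_compact B_ne])
      have "H w \<le> (\<integral>\<^sup>+x. ennreal E * (indicator unit_cube x * ennreal (exp (t * real (dJ J B x)))) \<partial>lborel)"
        unfolding H_def
      proof (rule nn_integral_mono)
        fix x
        have "t * real (dJ (insert j J) A (upd x j w)) \<le> t + t * real (dJ J B x)"
          using F6[of x w] t mult_left_mono[of "real (dJ (insert j J) A (upd x j w))" "real (dJ J B x) + 1" t]
          by (simp add: algebra_simps)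
        then have "exp (t * real (dJ (insert j J) A (upd x j w))) \<le> E * exp (t * real (dJ J B x))"
          by (simp add: E_def exp_add[symmetric])
        then have "F (upd x j w) \<le> ennreal E * ennreal (exp (t * real (dJ J B x)))"
          unfolding F_def using E1 by (simp add: ennreal_mult[symmetric])
        then show "indicator unit_cube x * F (upd x j w) \<le> ennreal E * (indicator unit_cube x * ennreal (exp (t * real (dJ J B x))))"
        proof -
          have "indicator unit_cube x * F (upd x j w) \<le> indicator unit_cube x * (ennreal E * ennreal (exp (t * real (dJ J B x))))"
            using \<open>F (upd x j w) \<le> _\<close> by (rule mult_left_mono) simp
          then show ?thesis by (simp add: mult_ac)
        qed
      qed
      also have "\<dots> = ennreal E * EI J B t"
        unfolding EI_def using m by (subst nn_integral_cmult) auto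
      finally have "emeasure lborel B * H w \<le> emeasure lborel B * (ennreal E * EI J B t)"
        by (rule mult_left_mono) simp
      also have "\<dots> = ennreal E * (emeasure lborel B * EI J B t)" by (simp add: mult_ac)
      also have "\<dots> \<le> ennreal E * ennreal c"
        unfolding c_def by (intro mult_left_mono IH[OF B_compact B_sub B_ne]) simp
      finally have "ennreal (b * h w) \<le> ennreal (E * c)" using h0 E1 c0 b0
        by (simp add: eb H_eq ennreal_mult)
      then show ?thesis using E1 c0 by simp
    qed
    have P3: "v w \<le> b" if "w \<in> {0..1}" for w
    proof -
      have "emeasure lborel (Aw w) \<le> emeasure lborel B" using Aw_sub[OF that] B_borel by (intro emeasure_mono) auto
      then show ?thesis using eb V_eq2[of w] by (simp add: V_def b_def measure_nonneg)
    qed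
    define K where "K = c * E / b\<^sup>2"
    define R where "R = c * (1 + E) / b"
    have K0: "K \<ge> 0" using c0 E1 by (simp add: K_def)
    have pw: "indicator {0..1} w * H w + ennreal K * (indicator {0..1} w * V w) \<le> indicator {0..1} w * ennreal R" for w
    proof (cases "w \<in> {0..1}")
      case True
      have "h w + K * v w \<le> R"
        unfolding K_def R_def
        by (rule pw_ineq[OF h0 v0 P3[OF True] b0 less_imp_le[OF c0] E1 P1 P2])
      then have "ennreal (h w + K * v w) \<le> ennreal R" by (rule ennreal_leI)
      then show ?thesis using True h0 v0 K0 by (simp add: H_eq V_eq2 ennreal_mult)
    next
      case False
      then show ?thesis by simp
    qed
    have eq1: "(\<integral>\<^sup>+w. indicator {0..1} w * H w + ennreal K * (indicator {0..1} w * V w) \<partial>lborel)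
        = EI (insert j J) A t + ennreal K * emeasure lborel A"
      unfolding EI_split A_split
      by (subst nn_integral_add) (auto simp: nn_integral_cmult)
    have le1: "(\<integral>\<^sup>+w. indicator {0..1} w * H w + ennreal K * (indicator {0..1} w * V w) \<partial>lborel)
        \<le> (\<integral>\<^sup>+w. indicator {0..1::real} w * ennreal R \<partial>lborel)"
      by (intro nn_integral_mono pw)
    have eq2: "(\<integral>\<^sup>+w. indicator {0..1::real} w * ennreal R \<partial>lborel) = ennreal R"
      by (subst mult.commute, subst nn_integral_cmult_indicator) auto
    have ineq: "EI (insert j J) A t + ennreal K * emeasure lborel A \<le> ennreal R"
      using le1 unfolding eq1 eq2 .
    define e where "e = enn2real (EI (insert j J) A t)"
    have EIe: "EI (insert j J) A t = ennreal e"
      unfolding e_def using EI_bound[OF A(3) t, of "insert j J"] by (simp add: le_less_trans[OF _ ennreal_less_top])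
    have e0: "e \<ge> 0" by (simp add: e_def)
    have "ennreal (e + K * a) \<le> ennreal R" using ineq e0 K0 a0 by (simp add: EIe ea ennreal_mult)
    then have eK: "e + K * a \<le> R" using c0 E1 b0 by (simp add: R_def)
    have "a * e \<le> a * (R - K * a)" using eK a0 by (intro mult_left_mono) auto
    also have "\<dots> = c * ((a / b) * (1 + E) - E * (a / b)\<^sup>2)"
      using b0 by (simp add: R_def K_def field_simps power2_eq_square)
    also have "\<dots> \<le> c * exp (t\<^sup>2 / 4)"
      using key_ineq[OF t, of "a / b"] c0 by (intro mult_left_mono) (auto simp: E_def)
    also have "\<dots> = exp (real (card (insert j J)) * t\<^sup>2 / 4)"
      using insert.hyps by (simp add: c_def exp_add[symmetric] algebra_simps)
    finally have "a * e \<le> exp (real (card (insert j J)) * t\<^sup>2 / 4)" .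
    then show ?thesis using a0 e0 by (simp add: ea EIe ennreal_mult[symmetric])
  qed
qed

lemma concentration:
  fixes K :: "(real^'n) set" and k :: nat
  assumes K: "compact K" "K \<subseteq> unit_cube" "K \<noteq> {}"
  shows "{x\<in>unit_cube. k \<le> dJ UNIV K x} \<in> sets borel"
    and "measure lborel K * measure lborel {x\<in>unit_cube. k \<le> dJ UNIV K x}
           \<le> exp (- (real k)\<^sup>2 / real CARD('n))"
proof -
  define D where "D = {x\<in>unit_cube. k \<le> dJ UNIV K x}"
  have "dJ UNIV K -` {k..} \<inter> space borel \<in> sets borel"
    by (rule measurable_sets[OF dJ_measurable[OF K(1) K(3)]]) simp
  then have Dm: "D \<in> sets borel"
  proof -
    assume h: "dJ UNIV K -` {k..} \<inter> space borel \<in> sets borel"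
    have "D = unit_cube \<inter> (dJ UNIV K -` {k..} \<inter> space borel)" by (auto simp: D_def)
    then show ?thesis using h by simp
  qed
  then show "{x\<in>unit_cube. k \<le> dJ UNIV K x} \<in> sets borel" by (simp add: D_def)
  define n where "n = real CARD('n)"
  have n0: "n > 0" by (simp add: n_def)
  define t where "t = 2 * real k / n"
  have t0: "t \<ge> 0" using n0 by (simp add: t_def)
  have "ennreal (exp (t * real k)) * emeasure lborel D = (\<integral>\<^sup>+x. ennreal (exp (t * real k)) * indicator D x \<partial>lborel)"
    using Dm by (simp add: nn_integral_cmult_indicator)
  also have "\<dots> \<le> EI UNIV K t"
    unfolding EI_def
  proof (rule nn_integral_mono)
    fix x
    show "ennreal (exp (t * real k)) * indicator D x \<le> indicator unit_cube x * ennreal (exp (t * real (dJ UNIV K x)))"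
    proof (cases "x \<in> D")
      case True
      then have "x \<in> unit_cube" "t * real k \<le> t * real (dJ UNIV K x)"
        using t0 by (auto simp: D_def intro!: mult_left_mono)
      then show ?thesis using True by (simp add: ennreal_leI)
    qed simp
  qed
  finally have "emeasure lborel K * (ennreal (exp (t * real k)) * emeasure lborel D) \<le> emeasure lborel K * EI UNIV K t"
    by (rule mult_left_mono) simp
  also have "\<dots> \<le> ennreal (exp (real (card (UNIV :: 'n set)) * t\<^sup>2 / 4))"
    by (rule talagrand[OF _ t0 K]) simp
  finally have le: "emeasure lborel K * (ennreal (exp (t * real k)) * emeasure lborel D) \<le> ennreal (exp (n * t\<^sup>2 / 4))"
    by (simp add: n_def)
  have eK: "emeasure lborel K = ennreal (measure lborel K)"
    using emeasure_sub_cube_finite[OF K(2)] by (intro emeasure_eq_ennreal_measure) (auto simp: top_unique)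
  have eD: "emeasure lborel D = ennreal (measure lborel D)"
    using emeasure_sub_cube_finite[of D] by (intro emeasure_eq_ennreal_measure) (auto simp: top_unique D_def)
  have "measure lborel K * (exp (t * real k) * measure lborel D) \<le> exp (n * t\<^sup>2 / 4)"
    using le by (simp add: eK eD ennreal_mult[symmetric] measure_nonneg)
  then have "measure lborel K * measure lborel D * exp (t * real k) \<le> exp (n * t\<^sup>2 / 4)"
    by (simp add: mult_ac)
  then have "measure lborel K * measure lborel D \<le> exp (n * t\<^sup>2 / 4) / exp (t * real k)"
    by (simp add: field_simps)
  also have "\<dots> = exp (n * t\<^sup>2 / 4 - t * real k)" by (simp add: exp_diff)
  also have "n * t\<^sup>2 / 4 - t * real k = - (real k)\<^sup>2 / n"
    using n0 by (simp add: t_def field_simps power2_eq_square)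
  finally show "measure lborel K * measure lborel {x\<in>unit_cube. k \<le> dJ UNIV K x} \<le> exp (- (real k)\<^sup>2 / real CARD('n))"
    by (simp add: D_def n_def)
qed

theorem theorem3:
  fixes \<rho> :: "nat \<Rightarrow> real ^ 'n \<Rightarrow> real"
    and C :: "real ^ 'n \<Rightarrow> nat"
    and m c :: nat and \<epsilon> :: real
  assumes dens: "\<forall>k\<in>{1..m}. bounded_prob_density_on_cube (\<rho> k)"
    and C_range: "\<forall>x\<in>unit_cube. C x \<in> {1..m}"
    and C_meas: "\<forall>k\<in>{1..m}. {x\<in>unit_cube. C x = k} \<in> sets lebesgue"
    and c_in: "c \<in> {1..m}"
    and f_c: "measure lebesgue {x\<in>unit_cube. C x = c} \<le> 1/2"
    and eps: "\<epsilon> \<ge> 0"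
  shows "\<exists>A \<in> sets lebesgue.
           A \<subseteq> {x\<in>unit_cube. C x \<noteq> c \<or>
                    (\<exists>xh\<in>unit_cube. C xh \<noteq> c \<and> real (hamming x xh) \<le> \<epsilon>)} \<and>
           (LINT x:A|lebesgue. \<rho> c x)
             \<ge> 1 - 2 * (SUP x\<in>unit_cube. \<rho> c x) * exp (- (\<epsilon>\<^sup>2) / real CARD('n))"
proof -
  define n where "n = real CARD('n)"
  have n0: "n > 0" by (simp add: n_def)
  define U where "U = (SUP x\<in>unit_cube. \<rho> c x)"
  have dc: "bounded_prob_density_on_cube (\<rho> c)" using dens c_in by blast
  then have rho0: "\<And>x. x \<in> unit_cube \<Longrightarrow> 0 \<le> \<rho> c x"
    and rho_int: "set_integrable lebesgue unit_cube (\<rho> c)"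
    and rho_1: "(LINT x:unit_cube|lebesgue. \<rho> c x) = 1"
    and rho_bdd: "bdd_above (\<rho> c ` unit_cube)"
    by (auto simp: bounded_prob_density_on_cube_def)
  have rhoU: "\<rho> c x \<le> U" if "x \<in> unit_cube" for x
    unfolding U_def using rho_bdd that by (rule cSUP_upper2) simp
  have zQ: "(0::real^'n) \<in> unit_cube" by (simp add: unit_cube_def)
  have U0: "U \<ge> 0" using rho0[OF zQ] rhoU[OF zQ] by simp
  define B0 where "B0 = {x\<in>unit_cube. C x \<noteq> c}"
  have Cc: "{x\<in>unit_cube. C x = c} \<in> sets lebesgue" using C_meas c_in by blast
  have Ql: "unit_cube \<in> sets lebesgue" by simp
  have B0_eq: "B0 = unit_cube - {x\<in>unit_cube. C x = c}" by (auto simp: B0_def)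
  have B0l: "B0 \<in> sets lebesgue" unfolding B0_eq using Cc Ql by blast
  have mQ: "measure lebesgue (unit_cube :: (real^'n) set) = 1"
    by (simp add: measure_def emeasure_unit_cube)
  have eQfin: "emeasure lebesgue (unit_cube :: (real^'n) set) \<noteq> \<infinity>"
    by (simp add: emeasure_unit_cube)
  have mB0: "measure lebesgue B0 \<ge> 1/2"
  proof -
    have "measure lebesgue B0 = measure lebesgue (unit_cube::(real^'n) set) - measure lebesgue {x\<in>unit_cube. C x = c}"
      unfolding B0_eq by (rule measure_Diff[OF eQfin Ql Cc]) auto
    then show ?thesis using mQ f_c by simp
  qed
  define kk where "kk = nat (floor \<epsilon>) + 1"
  have kk_gt: "real kk > \<epsilon>" unfolding kk_def using eps by linarith
  have kk_le: "real j \<le> \<epsilon>" if "j < kk" for j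
  proof -
    have "j \<le> nat (floor \<epsilon>)" using that by (simp add: kk_def)
    then have "real j \<le> real (nat (floor \<epsilon>))" by simp
    also have "\<dots> \<le> \<epsilon>" using eps by linarith
    finally show ?thesis .
  qed
  define r where "r = exp ((\<epsilon>\<^sup>2 - (real kk)\<^sup>2) / n) / 2"
  have r0: "r > 0" by (simp add: r_def)
  have r_half: "r < 1/2"
  proof -
    have "\<epsilon>\<^sup>2 < (real kk)\<^sup>2" using kk_gt eps by (intro power_strict_mono) auto
    then have "(\<epsilon>\<^sup>2 - (real kk)\<^sup>2) / n < 0" using n0 by (simp add: divide_neg_pos)
    then show ?thesis by (simp add: r_def)
  qed
  obtain T where T: "closed T" "T \<subseteq> B0" "B0 - T \<in> lmeasurable" "emeasure lebesgue (B0 - T) < ennreal (1/2 - r)"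
    using sets_lebesgue_inner_closed[OF B0l, of "1/2 - r"] r_half by auto
  have TQ: "T \<subseteq> unit_cube" using T(2) by (auto simp: B0_def)
  have Tc: "compact T" using T(1) TQ compact_unit_cube
    by (metis compact_Int_closed inf.absorb_iff2)
  have Tb: "T \<in> sets borel" by (rule compact_borel[OF Tc])
  have mT: "measure lborel T > r"
  proof -
    have "measure lebesgue (B0 - T) < 1/2 - r"
    proof -
      have "emeasure lebesgue (B0 - T) \<noteq> top" using T(4) by (metis ennreal_less_top order.strict_trans less_irrefl)
      then have "emeasure lebesgue (B0 - T) = ennreal (measure lebesgue (B0 - T))" by (rule emeasure_eq_ennreal_measure)
      then show ?thesis using T(4) by (simp add: ennreal_less_iff measure_nonneg)
    qed
    moreover have "measure lebesgue B0 = measure lebesgue T + measure lebesgue (B0 - T)"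
    proof -
      have "measure lebesgue (B0 - T) = measure lebesgue B0 - measure lebesgue T"
      proof (rule measure_Diff)
        have "emeasure lebesgue B0 \<le> emeasure lebesgue (unit_cube::(real^'n) set)"
          using B0l by (intro emeasure_mono) (auto simp: B0_def)
        then show "emeasure lebesgue B0 \<noteq> \<infinity>" by (auto simp: emeasure_unit_cube top_unique)
      qed (use T(2) Tb B0l in auto)
      then show ?thesis by simp
    qed
    ultimately show ?thesis using mB0 Tb by simp
  qed
  have Tne: "T \<noteq> {}" using mT r0 by auto
  define D where "D = {x\<in>unit_cube. kk \<le> dJ UNIV T x}"
  have Db: "D \<in> sets borel" unfolding D_def by (rule concentration(1)[OF Tc TQ Tne])
  have conc: "measure lborel T * measure lborel D \<le> exp (- (real kk)\<^sup>2 / n)"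
    unfolding D_def n_def by (rule concentration(2)[OF Tc TQ Tne])
  have mD: "measure lborel D \<le> 2 * exp (- (\<epsilon>\<^sup>2) / n)"
  proof -
    have "r * measure lborel D \<le> measure lborel T * measure lborel D"
      using mT by (intro mult_right_mono) (auto simp: measure_nonneg)
    also note conc
    finally have "measure lborel D \<le> exp (- (real kk)\<^sup>2 / n) / r" using r0 by (simp add: field_simps)
    also have "\<dots> = 2 * exp (- (\<epsilon>\<^sup>2) / n)"
    proof -
      have "exp (- (real kk)\<^sup>2 / n) = exp (- (\<epsilon>\<^sup>2) / n) * exp ((\<epsilon>\<^sup>2 - (real kk)\<^sup>2) / n)"
        by (simp add: exp_add[symmetric] diff_divide_distrib)
      then show ?thesis unfolding r_def by simp
    qed
    finally show ?thesis .
  qed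
  define A where "A = unit_cube - D"
  have Dl: "D \<in> sets lebesgue" using Db by simp
  have DQ: "D \<subseteq> unit_cube" by (auto simp: D_def)
  have Al: "A \<in> sets lebesgue" unfolding A_def using Dl Ql by blast
  have A_sub: "A \<subseteq> {x\<in>unit_cube. C x \<noteq> c \<or> (\<exists>xh\<in>unit_cube. C xh \<noteq> c \<and> real (hamming x xh) \<le> \<epsilon>)}"
  proof
    fix x assume "x \<in> A"
    then have xQ: "x \<in> unit_cube" and lt: "dJ UNIV T x < kk" by (auto simp: A_def D_def)
    obtain y where y: "y \<in> T" "dJ UNIV T x = card {i\<in>UNIV. x$i \<noteq> y$i}" using dJ_ex[OF Tne] by blast
    have "y \<in> B0" using y(1) T(2) by auto
    then have "y \<in> unit_cube" "C y \<noteq> c" by (auto simp: B0_def)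
    moreover have "real (hamming x y) \<le> \<epsilon>" using kk_le[OF lt] y(2) by (simp add: hamming_def)
    ultimately show "x \<in> {x\<in>unit_cube. C x \<noteq> c \<or> (\<exists>xh\<in>unit_cube. C xh \<noteq> c \<and> real (hamming x xh) \<le> \<epsilon>)}"
      using xQ by blast
  qed
  have intA: "set_integrable lebesgue A (\<rho> c)" using rho_int Al by (rule set_integrable_subset) (auto simp: A_def)
  have intD: "set_integrable lebesgue D (\<rho> c)" using rho_int Dl DQ by (rule set_integrable_subset)
  have QAD: "unit_cube = A \<union> D" using DQ by (auto simp: A_def)
  have "1 = (LINT x:unit_cube|lebesgue. \<rho> c x)" using rho_1 by simp
  also have "\<dots> = (LINT x:A|lebesgue. \<rho> c x) + (LINT x:D|lebesgue. \<rho> c x)"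
    unfolding QAD by (rule set_integral_Un[OF _ intA intD]) (auto simp: A_def)
  finally have sum1: "(LINT x:A|lebesgue. \<rho> c x) = 1 - (LINT x:D|lebesgue. \<rho> c x)" by simp
  have eDfin: "emeasure lebesgue D < \<infinity>"
  proof -
    have "emeasure lebesgue D \<le> emeasure lebesgue (unit_cube::(real^'n) set)"
      using Dl DQ by (intro emeasure_mono) auto
    then show ?thesis by (auto simp: emeasure_unit_cube top_unique less_top[symmetric])
  qed
  have intU: "set_integrable lebesgue D (\<lambda>_. U)"
    unfolding set_integrable_def using Dl eDfin by (intro integrable_scaleR_left integrable_real_indicator) auto
  have "(LINT x:D|lebesgue. \<rho> c x) \<le> (LINT x:D|lebesgue. U)"
    using intD intU by (rule set_integral_mono) (use rhoU DQ in auto)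
  also have "\<dots> = measure lebesgue D * U"
    using Dl eDfin by (simp add: set_integral_const)
  also have "measure lebesgue D = measure lborel D" using Db by simp
  also have "measure lborel D * U \<le> 2 * exp (- (\<epsilon>\<^sup>2) / n) * U"
    using mD U0 by (rule mult_right_mono)
  finally have "(LINT x:D|lebesgue. \<rho> c x) \<le> 2 * U * exp (- (\<epsilon>\<^sup>2) / n)" by (simp add: mult_ac)
  then have "(LINT x:A|lebesgue. \<rho> c x) \<ge> 1 - 2 * U * exp (- (\<epsilon>\<^sup>2) / n)" using sum1 by simp
  then show ?thesis using Al A_sub unfolding U_def n_def by blast
qed

end
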